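(* Let $N\ge 1$ and $S_1,\dots,S_N\ge 1$. Consider an $S_1\times\cdots\times S_N$-setting $N$-partite correlation experiment in which party $n$ performs measurements $s_n\in\{1,\dots,S_n\}$ with outcomes $\lambda_n^{(s_n)}$ in a measurable space $\Lambda_n^{(s_n)}$ (of any type, discrete or continuous), described by joint probability distributions $P_{(s_1,\dots,s_N)}$ on $\Lambda_1^{(s_1)}\times\cdots\times\Lambda_N^{(s_N)}$, and suppose the experiment admits an LHV model (conditional or unconditional). Write $\lambda_n=(\lambda_n^{(1)},\dots,\lambda_n^{(S_n)})$ and $\Lambda_n=\Lambda_n^{(1)}\times\cdots\times\Lambda_n^{(S_n)}$. (i) For any collection $\{\Psi_{(s_1,\dots,s_N)}\}$ of bounded measurable real-valued functions, $\Psi_{(s_1,\dots,s_N)}$ defined on $\Lambda_1^{(s_1)}\times\cdots\times\Lambda_N^{(s_N)}$, the following tight linear LHV constraint holds: $$\inf_{\lambda_1\in\Lambda_1,\dots,\lambda_N\in\Lambda_N}\sum_{s_1,\dots,s_N}\Psi_{(s_1,\dots,s_N)}(\lambda_1^{(s_1)},\dots,\lambda_N^{(s_N)})\le\sum_{s_1,\dots,s_N}\big\langle\Psi_{(s_1,\dots,s_N)}(\lambda_1^{(s_1)},\dots,\lambda_N^{(s_N)})\big\rangle_{LHV}\le\sup_{\lambda_1\in\Lambda_1,\dots,\lambda_N\in\Lambda_N}\sum_{s_1,\dots,s_N}\Psi_{(s_1,\dots,s_N)}(\lambda_1^{(s_1)},\dots,\lambda_N^{(s_N)}).$$ (ii)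 In particular, for any bounded measurable real-valued functions $\phi_n^{(s_n)}$ on $\Lambda_n^{(s_n)}$ (all $s_n$, $n$) and any real coefficients $\gamma_{(s_1,\dots,s_N)}$, the tight linear LHV constraint $$\inf_{\xi_1\in\Phi_1,\dots,\xi_N\in\Phi_N}F_N^{(\gamma)}(\xi_1,\dots,\xi_N)\le\sum_{s_1,\dots,s_N}\gamma_{(s_1,\dots,s_N)}\big\langle\phi_1^{(s_1)}(\lambda_1^{(s_1)})\cdots\phi_N^{(s_N)}(\lambda_N^{(s_N)})\big\rangle_{LHV}\le\sup_{\xi_1\in\Phi_1,\dots,\xi_N\in\Phi_N}F_N^{(\gamma)}(\xi_1,\dots,\xi_N)$$ holds, where $F_N^{(\gamma)}(\xi_1,\dots,\xi_N)=\sum_{s_1,\dots,s_N}\gamma_{(s_1,\dots,s_N)}\,\xi_1^{(s_1)}\cdots\xi_N^{(s_N)}$ is the $N$-linear form of vectors $\xi_n=(\xi_n^{(1)},\dots,\xi_n^{(S_n)})\in\mathbb{R}^{S_n}$, and $\Phi_n=\{\xi_n\in\mathbb{R}^{S_n}:\ \xi_n^{(s_n)}=\phi_n^{(s_n)}(\lambda_n^{(s_n)}),\ \lambda_n^{(s_n)}\in\Lambda_n^{(s_n)},\ s_n=1,\dots,S_n\}$.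
   Context: All sums over $s_n$ range over $1,\dots,S_n$. For a joint measurement $(s_1,\dots,s_N)$ and a bounded measurable real function $\Psi$, $\langle\Psi(\lambda_1^{(s_1)},\dots,\lambda_N^{(s_N)})\rangle=\int\Psi\,dP_{(s_1,\dots,s_N)}$; the subscript LHV indicates the experiment admits an LHV model. The experiment admitting an LHV model (conditional or unconditional) is characterized by the existence of a probability measure $\mu$ on $\Lambda_1\times\cdots\times\Lambda_N$ (joint distribution of all outcomes of all measurements at all sites) such that every $P_{(s_1,\dots,s_N)}$ is the marginal of $\mu$ on the coordinates $(\lambda_1^{(s_1)},\dots,\lambda_N^{(s_N)})$. A linear LHV constraint is called tight if, within the class of experiments (with the given outcome sets) admitting an LHV model, its bounds cannot be improved. *)

theory Defs
  imports "HOL-Probability.Probability"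
begin

text \<open>Conventions: parties are indexed by n < N, the settings of party n by s < S n
(0-based). The outcome space of measurement s of party n is the measurable space M n s.\<close>

definition settings :: "nat \<Rightarrow> (nat \<Rightarrow> nat) \<Rightarrow> (nat \<Rightarrow> nat) set" where
  "settings N S = PiE {..<N} (\<lambda>n. {..<S n})"

definition idx :: "nat \<Rightarrow> (nat \<Rightarrow> nat) \<Rightarrow> (nat \<times> nat) set" where
  "idx N S = Sigma {..<N} (\<lambda>n. {..<S n})"

definition joint_space ::
  "(nat \<Rightarrow> nat \<Rightarrow> 'a measure) \<Rightarrow> nat \<Rightarrow> (nat \<Rightarrow> nat) \<Rightarrow> ((nat \<times> nat) \<Rightarrow> 'a) measure" where
  "joint_space M N S = PiM (idx N S) (\<lambda>(n, s). M n s)"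

definition meas_space ::
  "(nat \<Rightarrow> nat \<Rightarrow> 'a measure) \<Rightarrow> nat \<Rightarrow> (nat \<Rightarrow> nat) \<Rightarrow> (nat \<Rightarrow> 'a) measure" where
  "meas_space M N sv = PiM {..<N} (\<lambda>n. M n (sv n))"

definition select :: "nat \<Rightarrow> (nat \<Rightarrow> nat) \<Rightarrow> ((nat \<times> nat) \<Rightarrow> 'a) \<Rightarrow> (nat \<Rightarrow> 'a)" where
  "select N sv \<omega> = (\<lambda>n\<in>{..<N}. \<omega> (n, sv n))"

definition lhv_model ::
  "(nat \<Rightarrow> nat \<Rightarrow> 'a measure) \<Rightarrow> nat \<Rightarrow> (nat \<Rightarrow> nat) \<Rightarrow> ((nat \<Rightarrow> nat) \<Rightarrow> (nat \<Rightarrow> 'a) measure) \<Rightarrow> bool" where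
  "lhv_model M N S P \<longleftrightarrow>
     (\<exists>\<mu>. prob_space \<mu> \<and> sets \<mu> = sets (joint_space M N S) \<and>
          (\<forall>sv\<in>settings N S. P sv = distr \<mu> (meas_space M N sv) (select N sv)))"

definition lhv_sum ::
  "nat \<Rightarrow> (nat \<Rightarrow> nat) \<Rightarrow> ((nat \<Rightarrow> nat) \<Rightarrow> (nat \<Rightarrow> 'a) measure) \<Rightarrow> ((nat \<Rightarrow> nat) \<Rightarrow> (nat \<Rightarrow> 'a) \<Rightarrow> real) \<Rightarrow> real" where
  "lhv_sum N S P \<Psi> = (\<Sum>sv\<in>settings N S. \<integral>x. \<Psi> sv x \<partial>P sv)"

definition det_sum ::
  "nat \<Rightarrow> (nat \<Rightarrow> nat) \<Rightarrow> ((nat \<Rightarrow> nat) \<Rightarrow> (nat \<Rightarrow> 'a) \<Rightarrow> real) \<Rightarrow> ((nat \<times> nat) \<Rightarrow> 'a) \<Rightarrow> real" where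
  "det_sum N S \<Psi> \<omega> = (\<Sum>sv\<in>settings N S. \<Psi> sv (select N sv \<omega>))"

definition Phi ::
  "(nat \<Rightarrow> nat \<Rightarrow> 'a measure) \<Rightarrow> (nat \<Rightarrow> nat) \<Rightarrow> (nat \<Rightarrow> nat \<Rightarrow> 'a \<Rightarrow> real) \<Rightarrow> nat \<Rightarrow> (nat \<Rightarrow> real) set" where
  "Phi M S \<phi> n = (\<lambda>l. \<lambda>s\<in>{..<S n}. \<phi> n s (l s)) ` space (PiM {..<S n} (M n))"

definition F_form ::
  "nat \<Rightarrow> (nat \<Rightarrow> nat) \<Rightarrow> ((nat \<Rightarrow> nat) \<Rightarrow> real) \<Rightarrow> (nat \<Rightarrow> nat \<Rightarrow> real) \<Rightarrow> real" where
  "F_form N S \<gamma> \<xi> = (\<Sum>sv\<in>settings N S. \<gamma> sv * (\<Prod>n<N. \<xi> n (sv n)))"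

definition corr_sum ::
  "nat \<Rightarrow> (nat \<Rightarrow> nat) \<Rightarrow> ((nat \<Rightarrow> nat) \<Rightarrow> (nat \<Rightarrow> 'a) measure) \<Rightarrow> (nat \<Rightarrow> nat \<Rightarrow> 'a \<Rightarrow> real)
     \<Rightarrow> ((nat \<Rightarrow> nat) \<Rightarrow> real) \<Rightarrow> real" where
  "corr_sum N S P \<phi> \<gamma> =
     (\<Sum>sv\<in>settings N S. \<gamma> sv * (\<integral>x. (\<Prod>n<N. \<phi> n (sv n) (x n)) \<partial>P sv))"

end

theory Submission imports Defs begin

lemma select_meas: assumes sv: "sv \<in> settings N S" shows
  "select N sv \<in> measurable (joint_space M N S) (meas_space M N sv)"
  unfolding select_def meas_space_def joint_space_def
proof (rule measurable_restrict)
  fix n assume "n \<in> {..<N}"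
  then have "(n, sv n) \<in> idx N S" using sv by (auto simp: idx_def settings_def PiE_def Pi_def)
  from measurable_component_singleton[OF this, of "\<lambda>(n, s). M n s"]
  show "(\<lambda>x. x (n, sv n)) \<in> Pi\<^sub>M (idx N S) (\<lambda>(x, y). M x y) \<rightarrow>\<^sub>M M n (sv n)" by simp
qed

lemma inf_sup_lemma:
  fixes X D :: "real set"
  assumes "D \<subseteq> X" "bdd_above D" "bdd_below D" "\<forall>x\<in>X. Inf D \<le> x \<and> x \<le> Sup D"
    "D = {} \<Longrightarrow> X = {}"
  shows "Inf X = Inf D \<and> Sup X = Sup D"
proof (cases "D = {}")
  case True then show ?thesis using assms by simp
next
  case False
  then have X: "X \<noteq> {}" using assms by auto
  have bX: "bdd_below X" "bdd_above X" using assms(4) unfolding bdd_below_def bdd_above_def by auto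
  have "Inf X \<ge> Inf D" by (rule cInf_greatest[OF X]) (use assms(4) in auto)
  moreover have "Inf X \<le> Inf D"
    by (rule cInf_greatest[OF False]) (use assms(1) bX in \<open>auto intro: cInf_lower\<close>)
  moreover have "Sup X \<le> Sup D" by (rule cSup_least[OF X]) (use assms(4) in auto)
  moreover have "Sup X \<ge> Sup D"
    by (rule cSup_least[OF False]) (use assms(1) bX in \<open>auto intro: cSup_upper\<close>)
  ultimately show ?thesis by auto
qed

lemma part_i:
  fixes \<Psi> :: "(nat \<Rightarrow> nat) \<Rightarrow> (nat \<Rightarrow> 'a) \<Rightarrow> real"
  assumes \<Psi>_meas: "\<forall>sv\<in>settings N S. \<Psi> sv \<in> borel_measurable (meas_space M N sv)"
    and \<Psi>_bdd: "\<forall>sv\<in>settings N S. \<exists>B. \<forall>x\<in>space (meas_space M N sv). \<bar>\<Psi> sv x\<bar> \<le> B"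
  shows
    "(\<forall>P. lhv_model M N S P \<longrightarrow>
        Inf (det_sum N S \<Psi> ` space (joint_space M N S)) \<le> lhv_sum N S P \<Psi> \<and>
        lhv_sum N S P \<Psi> \<le> Sup (det_sum N S \<Psi> ` space (joint_space M N S)))
     \<and> Inf {lhv_sum N S P \<Psi> | P. lhv_model M N S P} = Inf (det_sum N S \<Psi> ` space (joint_space M N S))
     \<and> Sup {lhv_sum N S P \<Psi> | P. lhv_model M N S P} = Sup (det_sum N S \<Psi> ` space (joint_space M N S))"
proof -
  let ?J = "joint_space M N S"
  let ?D = "det_sum N S \<Psi> ` space ?J"
  have fin: "finite (settings N S)" unfolding settings_def by (simp add: finite_PiE)
  obtain B where B: "\<forall>sv\<in>settings N S. \<forall>x\<in>space (meas_space M N sv). \<bar>\<Psi> sv x\<bar> \<le> B sv"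
    using \<Psi>_bdd by metis
  have sel_sp: "select N sv \<omega> \<in> space (meas_space M N sv)" if "sv \<in> settings N S" "\<omega> \<in> space ?J" for sv \<omega>
    using measurable_space[OF select_meas[OF that(1)] that(2)] .
  have comp_meas: "(\<lambda>\<omega>. \<Psi> sv (select N sv \<omega>)) \<in> borel_measurable ?J" if "sv \<in> settings N S" for sv
    using measurable_comp[OF select_meas[OF that] \<Psi>_meas[rule_format, OF that]] by (simp add: o_def)
  have dbound: "\<bar>det_sum N S \<Psi> \<omega>\<bar> \<le> (\<Sum>sv\<in>settings N S. B sv)" if "\<omega> \<in> space ?J" for \<omega>
    unfolding det_sum_def
    by (rule order_trans[OF sum_abs sum_mono]) (use B sel_sp that in auto)
  have bdd: "bdd_above ?D" "bdd_below ?D"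
    using dbound unfolding bdd_above_def bdd_below_def
     apply (intro exI[of _ "\<Sum>sv\<in>settings N S. B sv"]) using dbound apply (force simp: abs_le_iff)
    apply (intro exI[of _ "-(\<Sum>sv\<in>settings N S. B sv)"]) using dbound apply (force simp: abs_le_iff)
    done
  have dmeas: "det_sum N S \<Psi> \<in> borel_measurable ?J"
    unfolding det_sum_def[abs_def] using comp_meas by (auto intro!: borel_measurable_sum)
  have bounds: "Inf ?D \<le> lhv_sum N S P \<Psi> \<and> lhv_sum N S P \<Psi> \<le> Sup ?D" if lhv: "lhv_model M N S P" for P
  proof -
    obtain \<mu> where mu: "prob_space \<mu>" "sets \<mu> = sets ?J"
      and P: "\<forall>sv\<in>settings N S. P sv = distr \<mu> (meas_space M N sv) (select N sv)"
      using lhv unfolding lhv_model_def by blast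
    interpret prob_space \<mu> by fact
    have sp: "space \<mu> = space ?J" using mu(2) by (rule sets_eq_imp_space_eq)
    note mcong = measurable_cong_sets[OF mu(2) refl]
    have cm: "(\<lambda>\<omega>. \<Psi> sv (select N sv \<omega>)) \<in> borel_measurable \<mu>" if "sv \<in> settings N S" for sv
      using comp_meas[OF that] by (simp add: mcong)
    have int: "integrable \<mu> (\<lambda>\<omega>. \<Psi> sv (select N sv \<omega>))" if "sv \<in> settings N S" for sv
      by (rule integrable_const_bound[where B="B sv"]) (use cm[OF that] B sel_sp that sp in auto)
    have "lhv_sum N S P \<Psi> = (\<Sum>sv\<in>settings N S. \<integral>\<omega>. \<Psi> sv (select N sv \<omega>) \<partial>\<mu>)"
      unfolding lhv_sum_def
      apply (rule sum.cong[OF refl])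
      apply (subst P[rule_format], assumption)
      apply (rule integral_distr)
      using select_meas \<Psi>_meas by (auto simp: mcong)
    also have "\<dots> = (\<integral>\<omega>. det_sum N S \<Psi> \<omega> \<partial>\<mu>)"
      unfolding det_sum_def using Bochner_Integration.integral_sum[where I="settings N S" and M=\<mu> and f="\<lambda>sv \<omega>. \<Psi> sv (select N sv \<omega>)"] int by auto
    finally have eq: "lhv_sum N S P \<Psi> = (\<integral>\<omega>. det_sum N S \<Psi> \<omega> \<partial>\<mu>)" .
    have dm: "det_sum N S \<Psi> \<in> borel_measurable \<mu>" using dmeas by (simp add: mcong)
    have di: "integrable \<mu> (det_sum N S \<Psi>)"
      by (rule integrable_const_bound[where B="\<Sum>sv\<in>settings N S. B sv"]) (use dm dbound sp in auto)
    have "(\<integral>\<omega>. det_sum N S \<Psi> \<omega> \<partial>\<mu>) \<le> Sup ?D"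
      by (rule integral_le_const[OF di]) (use bdd sp in \<open>auto intro!: cSup_upper\<close>)
    moreover have "(\<integral>\<omega>. det_sum N S \<Psi> \<omega> \<partial>\<mu>) \<ge> Inf ?D"
      by (rule integral_ge_const[OF di]) (use bdd sp in \<open>auto intro!: cInf_lower\<close>)
    ultimately show ?thesis using eq by simp
  qed
  have sub: "?D \<subseteq> {lhv_sum N S P \<Psi> | P. lhv_model M N S P}"
  proof
    fix y assume "y \<in> ?D"
    then obtain \<omega> where w: "\<omega> \<in> space ?J" "y = det_sum N S \<Psi> \<omega>" by auto
    define P where "P = (\<lambda>sv. distr (return ?J \<omega>) (meas_space M N sv) (select N sv))"
    have "lhv_model M N S P"
      unfolding lhv_model_def P_def
      by (rule exI[of _ "return ?J \<omega>"]) (use w in \<open>auto intro: prob_space_return\<close>)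
    moreover have "lhv_sum N S P \<Psi> = y"
      unfolding lhv_sum_def P_def w(2) det_sum_def
      apply (rule sum.cong[OF refl])
      apply (subst integral_distr)
        apply (subst measurable_cong_sets[OF sets_return refl])
      using select_meas \<Psi>_meas w(1) comp_meas
      by (auto intro!: integral_return)
    ultimately show "y \<in> {lhv_sum N S P \<Psi> | P. lhv_model M N S P}" by blast
  qed
  have empty: "{lhv_sum N S P \<Psi> | P. lhv_model M N S P} = {}" if "?D = {}"
  proof -
    { fix P assume "lhv_model M N S P"
      then obtain \<mu> where mu: "prob_space \<mu>" "sets \<mu> = sets ?J"
        unfolding lhv_model_def by blast
      have "space \<mu> \<noteq> {}" using mu(1) prob_space.not_empty by blast
      moreover have "space \<mu> = space ?J" using mu(2) by (rule sets_eq_imp_space_eq)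
      ultimately have False using that by simp }
    then show ?thesis by auto
  qed
  have "Inf {lhv_sum N S P \<Psi> | P. lhv_model M N S P} = Inf ?D \<and>
        Sup {lhv_sum N S P \<Psi> | P. lhv_model M N S P} = Sup ?D"
    by (rule inf_sup_lemma[OF sub bdd]) (use bounds empty in auto)
  with bounds show ?thesis by blast
qed

theorem theorem1:
  fixes N :: nat and S :: "nat \<Rightarrow> nat" and M :: "nat \<Rightarrow> nat \<Rightarrow> 'a measure"
    and \<Psi> :: "(nat \<Rightarrow> nat) \<Rightarrow> (nat \<Rightarrow> 'a) \<Rightarrow> real"
    and \<phi> :: "nat \<Rightarrow> nat \<Rightarrow> 'a \<Rightarrow> real" and \<gamma> :: "(nat \<Rightarrow> nat) \<Rightarrow> real"
  assumes "N \<ge> 1" and "\<forall>n<N. S n \<ge> 1"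
    and \<Psi>_meas: "\<forall>sv\<in>settings N S. \<Psi> sv \<in> borel_measurable (meas_space M N sv)"
    and \<Psi>_bdd: "\<forall>sv\<in>settings N S. \<exists>B. \<forall>x\<in>space (meas_space M N sv). \<bar>\<Psi> sv x\<bar> \<le> B"
    and \<phi>_meas: "\<forall>n<N. \<forall>s<S n. \<phi> n s \<in> borel_measurable (M n s)"
    and \<phi>_bdd: "\<forall>n<N. \<forall>s<S n. \<exists>B. \<forall>x\<in>space (M n s). \<bar>\<phi> n s x\<bar> \<le> B"
  shows
    \<comment> \<open>(i): the bounds hold for every LHV experiment ...\<close>
    "(\<forall>P. lhv_model M N S P \<longrightarrow>
        Inf (det_sum N S \<Psi> ` space (joint_space M N S)) \<le> lhv_sum N S P \<Psi> \<and>
        lhv_sum N S P \<Psi> \<le> Sup (det_sum N S \<Psi> ` space (joint_space M N S)))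
     \<comment> \<open>... and are tight\<close>
     \<and> Inf {lhv_sum N S P \<Psi> | P. lhv_model M N S P} = Inf (det_sum N S \<Psi> ` space (joint_space M N S))
     \<and> Sup {lhv_sum N S P \<Psi> | P. lhv_model M N S P} = Sup (det_sum N S \<Psi> ` space (joint_space M N S))
     \<comment> \<open>(ii): product correlation functionals\<close>
     \<and> (\<forall>P. lhv_model M N S P \<longrightarrow>
        Inf (F_form N S \<gamma> ` PiE {..<N} (Phi M S \<phi>)) \<le> corr_sum N S P \<phi> \<gamma> \<and>
        corr_sum N S P \<phi> \<gamma> \<le> Sup (F_form N S \<gamma> ` PiE {..<N} (Phi M S \<phi>)))
     \<and> Inf {corr_sum N S P \<phi> \<gamma> | P. lhv_model M N S P} = Inf (F_form N S \<gamma> ` PiE {..<N} (Phi M S \<phi>))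
     \<and> Sup {corr_sum N S P \<phi> \<gamma> | P. lhv_model M N S P} = Sup (F_form N S \<gamma> ` PiE {..<N} (Phi M S \<phi>))"
proof -
  define \<Psi>' where "\<Psi>' = (\<lambda>sv x. \<gamma> sv * (\<Prod>n<N. \<phi> n (sv n) (x n)))"
  let ?J = "joint_space M N S"
  obtain C where C: "\<forall>n<N. \<forall>s<S n. \<forall>x\<in>space (M n s). \<bar>\<phi> n s x\<bar> \<le> C n s"
    using \<phi>_bdd by metis
  have sv_lt: "sv n < S n" if "sv \<in> settings N S" "n < N" for sv n
    using that by (auto simp: settings_def PiE_def Pi_def)
  have m': "\<forall>sv\<in>settings N S. \<Psi>' sv \<in> borel_measurable (meas_space M N sv)"
  proof
    fix sv assume sv: "sv \<in> settings N S"
    have "(\<lambda>x. \<phi> n (sv n) (x n)) \<in> borel_measurable (meas_space M N sv)" if n: "n \<in> {..<N}" for n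
    proof -
      have "(\<lambda>x. x n) \<in> measurable (meas_space M N sv) (M n (sv n))"
        unfolding meas_space_def using measurable_component_singleton[OF n, of "\<lambda>n. M n (sv n)"] .
      from measurable_comp[OF this \<phi>_meas[rule_format, OF _ sv_lt[OF sv]]] n
      show ?thesis by (simp add: o_def)
    qed
    then show "\<Psi>' sv \<in> borel_measurable (meas_space M N sv)"
      unfolding \<Psi>'_def by (auto intro!: borel_measurable_times borel_measurable_prod)
  qed
  have b': "\<forall>sv\<in>settings N S. \<exists>B. \<forall>x\<in>space (meas_space M N sv). \<bar>\<Psi>' sv x\<bar> \<le> B"
  proof
    fix sv assume sv: "sv \<in> settings N S"
    have "\<bar>\<Psi>' sv x\<bar> \<le> \<bar>\<gamma> sv\<bar> * (\<Prod>n<N. C n (sv n))" if x: "x \<in> space (meas_space M N sv)" for x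
    proof -
      have xn: "x n \<in> space (M n (sv n))" if "n < N" for n
        using x that unfolding meas_space_def space_PiM by auto
      have "\<bar>\<Prod>n<N. \<phi> n (sv n) (x n)\<bar> \<le> (\<Prod>n<N. C n (sv n))"
        unfolding abs_prod
        by (rule prod_mono) (use C xn sv_lt[OF sv] in auto)
      then show ?thesis unfolding \<Psi>'_def abs_mult by (simp add: mult_left_mono)
    qed
    then show "\<exists>B. \<forall>x\<in>space (meas_space M N sv). \<bar>\<Psi>' sv x\<bar> \<le> B" by blast
  qed
  have corr: "corr_sum N S P \<phi> \<gamma> = lhv_sum N S P \<Psi>'" for P
    unfolding corr_sum_def lhv_sum_def \<Psi>'_def by simp
  have det: "det_sum N S \<Psi>' \<omega> = F_form N S \<gamma> \<xi>"
    if "\<forall>n<N. \<forall>s<S n. \<xi> n s = \<phi> n s (\<omega> (n, s))" for \<omega> \<xi>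
    unfolding det_sum_def F_form_def \<Psi>'_def select_def
    by (rule sum.cong[OF refl], simp, rule disjI2, rule prod.cong) (use that sv_lt in auto)
  have img: "F_form N S \<gamma> ` PiE {..<N} (Phi M S \<phi>) = det_sum N S \<Psi>' ` space ?J"
  proof (intro equalityI subsetI)
    fix y assume "y \<in> F_form N S \<gamma> ` PiE {..<N} (Phi M S \<phi>)"
    then obtain \<xi> where \<xi>: "\<xi> \<in> PiE {..<N} (Phi M S \<phi>)" and y: "y = F_form N S \<gamma> \<xi>" by auto
    have "\<forall>n\<in>{..<N}. \<exists>l. l \<in> space (PiM {..<S n} (M n)) \<and> \<xi> n = (\<lambda>s\<in>{..<S n}. \<phi> n s (l s))"
      using \<xi> unfolding Phi_def by (auto simp: PiE_def Pi_def)
    then obtain L where L: "\<forall>n\<in>{..<N}. L n \<in> space (PiM {..<S n} (M n)) \<and> \<xi> n = (\<lambda>s\<in>{..<S n}. \<phi> n s (L n s))"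
      by metis
    define \<omega> where "\<omega> = (\<lambda>(n, s). if (n, s) \<in> idx N S then L n s else undefined)"
    have "\<omega> \<in> space ?J"
      using L unfolding joint_space_def space_PiM \<omega>_def
      by (auto simp: idx_def PiE_def Pi_def extensional_def)
    moreover have "y = det_sum N S \<Psi>' \<omega>"
      unfolding y by (rule det[symmetric]) (use L in \<open>auto simp: \<omega>_def idx_def\<close>)
    ultimately show "y \<in> det_sum N S \<Psi>' ` space ?J" by blast
  next
    fix y assume "y \<in> det_sum N S \<Psi>' ` space ?J"
    then obtain \<omega> where \<omega>: "\<omega> \<in> space ?J" and y: "y = det_sum N S \<Psi>' \<omega>" by auto
    define \<xi> where "\<xi> = (\<lambda>n\<in>{..<N}. \<lambda>s\<in>{..<S n}. \<phi> n s (\<omega> (n, s)))"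
    have "\<xi> \<in> PiE {..<N} (Phi M S \<phi>)"
    proof -
      have "\<xi> n \<in> Phi M S \<phi> n" if n: "n < N" for n
      proof -
        have "(\<lambda>s\<in>{..<S n}. \<omega> (n, s)) \<in> space (PiM {..<S n} (M n))"
          using \<omega> n unfolding joint_space_def space_PiM by (auto simp: idx_def PiE_def Pi_def)
        then show ?thesis unfolding Phi_def \<xi>_def using n by (auto intro!: image_eqI[where x="\<lambda>s\<in>{..<S n}. \<omega> (n, s)"])
      qed
      then show ?thesis unfolding \<xi>_def by auto
    qed
    moreover have "y = F_form N S \<gamma> \<xi>"
      unfolding y by (rule det) (auto simp: \<xi>_def)
    ultimately show "y \<in> F_form N S \<gamma> ` PiE {..<N} (Phi M S \<phi>)" by blast
  qed
  show ?thesis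
    using part_i[OF \<Psi>_meas \<Psi>_bdd] part_i[OF m' b'] unfolding corr img by simp
qed

end
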